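(* Let $K=2$ and suppose that for every horizon $T$ (a multiple of $100$) a valid pair $(\eta,\gamma)=(\eta_T,\gamma_T)$ in the non-trivial regime is chosen. Then there exists $T_0$ such that for all $T\ge T_0$ with $\Pr(\mathcal E_2)>0$, WSU-UX run on the two-phase loss sequence satisfies $$\Pr\Bigl(\pi_{T+1,1}\le\tfrac34\,\Bigm|\,\mathcal E_2\Bigr)\le\frac{75}{4}\,e^{-c\eta T},\qquad c=\tfrac{79}{400}.$$
   Context: WSU-UX. Fix integers $K\ge 2$ and $T\ge 1$ and hyperparameters $\eta,\gamma$. The pair $(\eta,\gamma)$ is called valid if $\eta,\gamma\in(0,1/2)$ and $\eta K/\gamma\le 1/2$. Given a fixed loss sequence $\ell_t\in[0,1]^K$, WSU-UX sets $\pi_{1,i}=1/K$ and in each round $t$: forms $\tilde\pi_{t,i}=(1-\gamma)\pi_{t,i}+\gamma/K$; draws $I_t$ with $\Pr(I_t=i\mid\mathcal F_{t-1})=\tilde\pi_{t,i}$; sets $\hat\ell_{t,i}=\ell_{t,i}\mathbf 1[I_t=i]/\tilde\pi_{t,i}$; and updates $\pi_{t+1,i}=\pi_{t,i}\bigl(1-\eta(\hat\ell_{t,i}-\sum_{j}\pi_{t,j}\hat\ell_{t,j})\bigr)$; $\mathcal F_t$ is the history generated by $I_1,\dots,I_t$. Non-trivial regime: $\eta\ge T^{-2/3}$ and $\gamma\le T^{-1/3}$. Two-phase loss sequence ($K=2$, $T$ a multiple of $100$): with $T_1=\frac{T}{100}$, $\ell_{t,1}=1,\ell_{t,2}=0$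 for $1\le t\le T_1$ and $\ell_{t,1}=0,\ell_{t,2}=1$ for $T_1<t\le T$. Further $T_2=\frac{2}{10}T$, and $\mathcal E_2$ denotes the event $\{\pi_{T_1+T_2+1,1}\ge\frac14\}$. *)

theory Defs
  imports Complex_Main
begin

text \<open>WSU-UX with K arms, indexed 0..K-1 (paper's arm i is index i-1).
  Losses: l t i for round t (1-based) and arm index i.
  A history is a list of chosen arms in REVERSE chronological order:
  [I_t, ..., I_1].  wsu_pi K eta gamma l h is the weight vector pi_{t+1}
  after history h of length t; wsu_pi ... [] is pi_1.\<close>

definition wsu_tilde :: "nat \<Rightarrow> real \<Rightarrow> (nat \<Rightarrow> real) \<Rightarrow> nat \<Rightarrow> real" where
  "wsu_tilde K gamma p i = (1 - gamma) * p i + gamma / real K"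

fun wsu_pi :: "nat \<Rightarrow> real \<Rightarrow> real \<Rightarrow> (nat \<Rightarrow> nat \<Rightarrow> real) \<Rightarrow> nat list \<Rightarrow> nat \<Rightarrow> real" where
  "wsu_pi K eta gamma l [] = (\<lambda>i. 1 / real K)"
| "wsu_pi K eta gamma l (I # hs) =
     (let t = length hs + 1;
          p = wsu_pi K eta gamma l hs;
          lhat = (\<lambda>i. if i = I then l t i / wsu_tilde K gamma p i else 0)
      in (\<lambda>i. p i * (1 - eta * (lhat i - (\<Sum>j<K. p j * lhat j)))))"

fun wsu_hist_prob :: "nat \<Rightarrow> real \<Rightarrow> real \<Rightarrow> (nat \<Rightarrow> nat \<Rightarrow> real) \<Rightarrow> nat list \<Rightarrow> real" where
  "wsu_hist_prob K eta gamma l [] = 1"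
| "wsu_hist_prob K eta gamma l (I # hs) =
     wsu_hist_prob K eta gamma l hs * wsu_tilde K gamma (wsu_pi K eta gamma l hs) I"

definition histories :: "nat \<Rightarrow> nat \<Rightarrow> nat list set" where
  "histories K n = {hs. length hs = n \<and> set hs \<subseteq> {..<K}}"

definition wsu_prob :: "nat \<Rightarrow> real \<Rightarrow> real \<Rightarrow> (nat \<Rightarrow> nat \<Rightarrow> real) \<Rightarrow> nat \<Rightarrow> (nat list \<Rightarrow> bool) \<Rightarrow> real" where
  "wsu_prob K eta gamma l T E = (\<Sum>hs\<in>{hs\<in>histories K T. E hs}. wsu_hist_prob K eta gamma l hs)"

definition cond_prob :: "nat \<Rightarrow> real \<Rightarrow> real \<Rightarrow> (nat \<Rightarrow> nat \<Rightarrow> real) \<Rightarrow> nat \<Rightarrow> (nat list \<Rightarrow> bool) \<Rightarrow> (nat list \<Rightarrow> bool) \<Rightarrow> real" where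
  "cond_prob K eta gamma l T A E = wsu_prob K eta gamma l T (\<lambda>hs. A hs \<and> E hs) / wsu_prob K eta gamma l T E"

definition valid_pair :: "nat \<Rightarrow> real \<Rightarrow> real \<Rightarrow> bool" where
  "valid_pair K eta gamma \<longleftrightarrow> 0 < eta \<and> eta < 1/2 \<and> 0 < gamma \<and> gamma < 1/2 \<and> eta * real K / gamma \<le> 1/2"

definition nontrivial_regime :: "nat \<Rightarrow> real \<Rightarrow> real \<Rightarrow> bool" where
  "nontrivial_regime T eta gamma \<longleftrightarrow> eta \<ge> real T powr (-2/3) \<and> gamma \<le> real T powr (-1/3)"

text \<open>Two-phase loss sequence (K = 2), T1 = T/100. Arm 1 = index 0, arm 2 = index 1.\<close>
definition two_phase_loss :: "nat \<Rightarrow> nat \<Rightarrow> nat \<Rightarrow> real" where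
  "two_phase_loss T t i = (if t \<le> T div 100 then (if i = 0 then 1 else 0) else (if i = 0 then 0 else 1))"

text \<open>pi_{s+1} evaluated from a full history hs (length T, reversed): drop the last T-s rounds.\<close>
definition pi_at :: "nat \<Rightarrow> real \<Rightarrow> real \<Rightarrow> (nat \<Rightarrow> nat \<Rightarrow> real) \<Rightarrow> nat list \<Rightarrow> nat \<Rightarrow> nat \<Rightarrow> real" where
  "pi_at K eta gamma l hs s = wsu_pi K eta gamma l (drop (length hs - s) hs)"

end

theory Submission
  imports Defs
begin


lemma sum2: "(\<Sum>j<(2::nat). f j) = f 0 + (f 1::real)"
  by (simp add: numeral_2_eq_2)

lemma pi_step:
  "wsu_pi 2 e g l (I # h) i =
     wsu_pi 2 e g l h i * (1 - e * ((if i = I then l (length h + 1) i / wsu_tilde 2 g (wsu_pi 2 e g l h) i else 0)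
       - (if I < 2 then wsu_pi 2 e g l h I * (l (length h + 1) I / wsu_tilde 2 g (wsu_pi 2 e g l h) I) else 0)))"
  apply (simp add: Let_def sum2)
  by (auto simp: numeral_2_eq_2 less_Suc_eq)

lemma tilde_simp: "wsu_tilde 2 g p i = (1-g) * p i + g/2"
  by (simp add: wsu_tilde_def)

lemma inv:
  assumes g: "0 < g" "g < 1" and e: "0 \<le> e" "e * 2 / g \<le> 1/2"
    and l: "\<And>t i. 0 \<le> l t i \<and> l t i \<le> 1"
  shows "0 \<le> wsu_pi 2 e g l h 0 \<and> 0 \<le> wsu_pi 2 e g l h 1 \<and> wsu_pi 2 e g l h 0 + wsu_pi 2 e g l h 1 = 1"
proof (induction h)
  case Nil
  then show ?case by simp
next
  case (Cons I h)
  define p0 where "p0 = wsu_pi 2 e g l h 0"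
  define p1 where "p1 = wsu_pi 2 e g l h 1"
  define L where "L = l (length h + 1) I"
  have P1S: "wsu_pi 2 e g l h (Suc 0) = p1" by (simp add: p1_def)
  have ih: "0 \<le> p0" "0 \<le> p1" "p0 + p1 = 1" using Cons unfolding p0_def p1_def by auto
  have eg: "e * (2/g) \<le> 1/2" using e by simp
  have L: "0 \<le> L" "L \<le> 1" using l unfolding L_def by auto
  show ?case
  proof (cases "I = 0")
    case True
    have LI: "l (Suc (length h)) 0 = L" using True L_def by simp
    define t where "t = (1-g)*p0 + g/2"
    have t: "g/2 \<le> t" using ih g unfolding t_def by (simp add: mult_nonneg_nonneg)
    have tp: "0 < t" using t g by linarith
    have x: "L / t \<le> 2/g" using L t tp g
      proof -
      have "L/t \<le> 1/(g/2)" using L t g by (intro frac_le) auto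
      thus ?thesis by simp
    qed
    have y: "0 \<le> L/t" using L tp by simp
    have "p1 * (L/t) \<le> L/t" using ih y by (intro mult_left_le_one_le) auto
    have "e * (p1 * (L/t)) \<le> e * (2/g)"
      using x e \<open>p1 * (L/t) \<le> L/t\<close> by (intro mult_left_mono) auto
    hence z: "e * (p1 * (L/t)) \<le> 1" using eg by linarith
    have "wsu_pi 2 e g l (I # h) 0 = p0 * (1 - e * (L/t - p0 * (L/t)))"
      using True unfolding pi_step by (simp add: tilde_simp LI P1S flip: p0_def p1_def t_def)
    moreover have "L/t - p0 * (L/t) = p1 * (L/t)" proof - have "p1 = 1 - p0" using ih(3) by linarith thus ?thesis by (simp add: left_diff_distrib diff_divide_distrib) qed
    ultimately have a0: "wsu_pi 2 e g l (I # h) 0 = p0 * (1 - e * (p1 * (L/t)))" by simp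
    have a1: "wsu_pi 2 e g l (I # h) 1 = p1 * (1 + e * (p0 * (L/t)))"
      using True unfolding pi_step by (simp add: tilde_simp LI P1S flip: p0_def p1_def t_def)
    have "0 \<le> e * (p0 * (L/t))" using e ih y by (intro mult_nonneg_nonneg) auto
    moreover have "p0 * (e * (p1 * (L/t))) = p1 * (e * (p0 * (L/t)))" by simp
    ultimately show ?thesis unfolding a0 a1 using z ih
      by (intro conjI mult_nonneg_nonneg) (auto simp: ring_distribs)
  next
    case False
    show ?thesis
    proof (cases "I = 1")
      case True
      have LI: "l (Suc (length h)) (Suc 0) = L" using True L_def by simp
      define t where "t = (1-g)*p1 + g/2"
      have t: "g/2 \<le> t" using ih g unfolding t_def by (simp add: mult_nonneg_nonneg)
      have tp: "0 < t" using t g by linarith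
      have x: "L / t \<le> 2/g" using L t tp g
        proof -
      have "L/t \<le> 1/(g/2)" using L t g by (intro frac_le) auto
      thus ?thesis by simp
    qed
      have y: "0 \<le> L/t" using L tp by simp
      have "p0 * (L/t) \<le> L/t" using ih y by (intro mult_left_le_one_le) auto
      have "e * (p0 * (L/t)) \<le> e * (2/g)"
        using x e \<open>p0 * (L/t) \<le> L/t\<close> by (intro mult_left_mono) auto
      hence z: "e * (p0 * (L/t)) \<le> 1" using eg by linarith
      have "wsu_pi 2 e g l (I # h) 1 = p1 * (1 - e * (L/t - p1 * (L/t)))"
        using True unfolding pi_step by (simp add: tilde_simp LI P1S flip: p0_def p1_def t_def)
      moreover have "L/t - p1 * (L/t) = p0 * (L/t)" proof - have "p0 = 1 - p1" using ih(3) by linarith thus ?thesis by (simp add: left_diff_distrib diff_divide_distrib) qed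
      ultimately have a1: "wsu_pi 2 e g l (I # h) 1 = p1 * (1 - e * (p0 * (L/t)))" by simp
      have a0: "wsu_pi 2 e g l (I # h) 0 = p0 * (1 + e * (p1 * (L/t)))"
        using True unfolding pi_step by (simp add: tilde_simp LI P1S flip: p0_def p1_def t_def)
      have "0 \<le> e * (p1 * (L/t))" using e ih y by (intro mult_nonneg_nonneg) auto
      moreover have "p0 * (e * (p1 * (L/t))) = p1 * (e * (p0 * (L/t)))" by simp
    ultimately show ?thesis unfolding a0 a1 using z ih
      by (intro conjI mult_nonneg_nonneg) (auto simp: ring_distribs)
    next
      case False2: False
      have "wsu_pi 2 e g l (I # h) 0 = p0" "wsu_pi 2 e g l (I # h) 1 = p1"
        using False False2 unfolding p0_def p1_def by (simp_all add: pi_step del: wsu_pi.simps(2))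
      then show ?thesis using ih by simp
    qed
  qed
qed


lemma hist_Suc: "histories K (Suc n) = (\<lambda>(c,I). c @ [I]) ` (histories K n \<times> {..<K})"
proof (rule set_eqI)
  fix x show "x \<in> histories K (Suc n) \<longleftrightarrow> x \<in> (\<lambda>(c,I). c @ [I]) ` (histories K n \<times> {..<K})"
  proof
    assume "x \<in> histories K (Suc n)"
    then have "length x = Suc n" "set x \<subseteq> {..<K}" by (auto simp: histories_def)
    then obtain c I where "x = c @ [I]" by (metis length_Suc_conv_rev)
    then show "x \<in> (\<lambda>(c,I). c @ [I]) ` (histories K n \<times> {..<K})"
      using \<open>length x = Suc n\<close> \<open>set x \<subseteq> {..<K}\<close> by (auto simp: histories_def image_iff)
  next
    assume "x \<in> (\<lambda>(c,I). c @ [I]) ` (histories K n \<times> {..<K})"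
    then show "x \<in> histories K (Suc n)" by (auto simp: histories_def)
  qed
qed

lemma finite_hist: "finite (histories K n)"
proof (induction n)
  case 0
  have "histories K 0 = {[]}" by (auto simp: histories_def)
  then show ?case by simp
next
  case (Suc n)
  then show ?case by (simp add: hist_Suc)
qed

lemma sum_hist_Suc:
  "(\<Sum>x\<in>histories K (Suc n). f x) = (\<Sum>I<K. \<Sum>c\<in>histories K n. f (c @ [I]))"
proof -
  have inj: "inj_on (\<lambda>(c,I). c @ [I]) (histories K n \<times> {..<K})"
    by (auto simp: inj_on_def)
  have "(\<Sum>x\<in>histories K (Suc n). f x) = (\<Sum>(c,I)\<in>histories K n \<times> {..<K}. f (c @ [I]))"
    unfolding hist_Suc by (subst sum.reindex[OF inj]) (simp add: case_prod_unfold)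
  also have "\<dots> = (\<Sum>c\<in>histories K n. \<Sum>I<K. f (c @ [I]))"
    by (rule sum.cartesian_product[symmetric])
  also have "\<dots> = (\<Sum>I<K. \<Sum>c\<in>histories K n. f (c @ [I]))"
    by (rule sum.swap)
  finally show ?thesis .
qed

lemma hist_add: "histories K (a + b) = (\<lambda>(c,g). c @ g) ` (histories K a \<times> histories K b)"
proof (rule set_eqI)
  fix x show "x \<in> histories K (a+b) \<longleftrightarrow> x \<in> (\<lambda>(c,g). c @ g) ` (histories K a \<times> histories K b)"
  proof
    assume "x \<in> histories K (a+b)"
    then have "length x = a + b" "set x \<subseteq> {..<K}" by (auto simp: histories_def)
    moreover have "x = take a x @ drop a x" by simp
    ultimately show "x \<in> (\<lambda>(c,g). c @ g) ` (histories K a \<times> histories K b)"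
      unfolding image_iff histories_def
      by (intro bexI[of _ "(take a x, drop a x)"]) (auto dest: in_set_takeD in_set_dropD)
  next
    assume "x \<in> (\<lambda>(c,g). c @ g) ` (histories K a \<times> histories K b)"
    then show "x \<in> histories K (a+b)" by (auto simp: histories_def)
  qed
qed

lemma sum_hist_add:
  "(\<Sum>x\<in>histories K (a + b). f x) = (\<Sum>g\<in>histories K b. \<Sum>c\<in>histories K a. f (c @ g))"
proof -
  have inj: "inj_on (\<lambda>(c,g). c @ g) (histories K a \<times> histories K b)"
    by (auto simp: inj_on_def histories_def)
  have "(\<Sum>x\<in>histories K (a+b). f x) = (\<Sum>(c,g)\<in>histories K a \<times> histories K b. f (c @ g))"
    unfolding hist_add by (subst sum.reindex[OF inj]) (simp add: case_prod_unfold)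
  also have "\<dots> = (\<Sum>c\<in>histories K a. \<Sum>g\<in>histories K b. f (c @ g))"
    by (rule sum.cartesian_product[symmetric])
  also have "\<dots> = (\<Sum>g\<in>histories K b. \<Sum>c\<in>histories K a. f (c @ g))"
    by (rule sum.swap)
  finally show ?thesis .
qed


lemma key_ineq:
  fixes p0 t0 t1 a B :: real
  assumes "0 < p0" "t0 + t1 = 1" "1/4 \<le> t1" "0 \<le> t0" "0 \<le> a" "2 \<le> (1+a)^s"
  shows "t0 * (3/(4*p0))^s + t1 * (3/(4*(p0*(1+a))))^s \<le> 7/8 * (3/(4*p0))^s"
proof -
  define B where "B = (3/(4*p0))^s"
  have B0: "0 \<le> B" unfolding B_def using assms by simp
  have "(3/(4*(p0*(1+a))))^s = B / (1+a)^s"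
    unfolding B_def by (simp add: power_divide power_mult_distrib)
  also have "\<dots> \<le> B / 2" using B0 assms by (intro divide_left_mono) auto
  finally have b1: "(3/(4*(p0*(1+a))))^s \<le> B/2" .
  have "t0 * B + t1 * (3/(4*(p0*(1+a))))^s \<le> t0 * B + t1 * (B/2)"
    using b1 assms by (intro add_left_mono mult_left_mono) auto
  also have "\<dots> = B * ((t0 + t1) - t1/2)" by (simp add: algebra_simps)
  also have "\<dots> = B * (1 - t1/2)" using assms(2) by simp
  also have "\<dots> \<le> B * (7/8)" using assms(3) B0 by (intro mult_left_mono) auto
  finally show ?thesis unfolding B_def by simp
qed

context
  fixes e g :: real and l :: "nat \<Rightarrow> nat \<Rightarrow> real" and N :: nat
  assumes g: "0 < g" "g < 1" and e: "0 \<le> e" "e * 2 / g \<le> 1/2"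
    and lb: "\<And>t i. 0 \<le> l t i \<and> l t i \<le> 1"
    and ph2: "\<And>t. N < t \<Longrightarrow> l t 0 = 0 \<and> l t 1 = 1"
begin

lemma invc: "0 \<le> wsu_pi 2 e g l h 0" "0 \<le> wsu_pi 2 e g l h 1"
  "wsu_pi 2 e g l h 0 + wsu_pi 2 e g l h 1 = 1"
  using inv[OF g e lb] by auto

lemma tilde_sum: "wsu_tilde 2 g (wsu_pi 2 e g l h) 0 + wsu_tilde 2 g (wsu_pi 2 e g l h) 1 = 1"
proof -
  have "wsu_tilde 2 g (wsu_pi 2 e g l h) 0 + wsu_tilde 2 g (wsu_pi 2 e g l h) 1
      = (1-g) * (wsu_pi 2 e g l h 0 + wsu_pi 2 e g l h 1) + g"
    by (simp add: tilde_simp algebra_simps)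
  then show ?thesis using invc(3) by simp
qed

lemma tilde_nn: "i < 2 \<Longrightarrow> 0 \<le> wsu_tilde 2 g (wsu_pi 2 e g l h) i"
  using invc[of h] g by (auto simp: tilde_simp less_2_cases_iff)

lemma hp_nn: "set h \<subseteq> {..<2} \<Longrightarrow> 0 \<le> wsu_hist_prob 2 e g l h"
  by (induction h) (auto intro!: mult_nonneg_nonneg tilde_nn)

lemma total: "(\<Sum>c\<in>histories 2 n. wsu_hist_prob 2 e g l (c @ h)) = wsu_hist_prob 2 e g l h"
proof (induction n arbitrary: h)
  case 0
  have "histories 2 0 = {[]}" by (auto simp: histories_def)
  then show ?case by simp
next
  case (Suc n)
  have "(\<Sum>c\<in>histories 2 (Suc n). wsu_hist_prob 2 e g l (c @ h))
      = (\<Sum>I<2. \<Sum>c\<in>histories 2 n. wsu_hist_prob 2 e g l (c @ (I # h)))"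
    by (simp add: sum_hist_Suc)
  also have "\<dots> = (\<Sum>I<2. wsu_hist_prob 2 e g l (I # h))" by (simp add: Suc.IH)
  also have "\<dots> = wsu_hist_prob 2 e g l h *
      (wsu_tilde 2 g (wsu_pi 2 e g l h) 0 + wsu_tilde 2 g (wsu_pi 2 e g l h) 1)"
    by (simp add: sum2 algebra_simps)
  also have "\<dots> = wsu_hist_prob 2 e g l h" by (simp only: tilde_sum mult_1_right)
  finally show ?case .
qed

lemma step0: "N \<le> length h \<Longrightarrow> wsu_pi 2 e g l (0 # h) i = wsu_pi 2 e g l h i"
  using ph2[of "Suc (length h)"] unfolding pi_step by auto

lemma step1: "N \<le> length h \<Longrightarrow> wsu_pi 2 e g l (1 # h) 0 =
   wsu_pi 2 e g l h 0 * (1 + e * (wsu_pi 2 e g l h 1 / wsu_tilde 2 g (wsu_pi 2 e g l h) 1))"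
  using ph2[of "Suc (length h)"] unfolding pi_step by auto

lemma mono1: "N \<le> length h \<Longrightarrow> wsu_pi 2 e g l h 0 \<le> wsu_pi 2 e g l (I # h) 0"
proof -
  assume N: "N \<le> length h"
  consider "I = 0" | "I = 1" | "I \<noteq> 0 \<and> I \<noteq> 1" by blast
  then show ?thesis
  proof cases
    case 1 then show ?thesis using step0[OF N] by simp
  next
    case 2
    have "0 \<le> e * (wsu_pi 2 e g l h 1 / wsu_tilde 2 g (wsu_pi 2 e g l h) 1)"
      using e invc tilde_nn[of 1 h] by (intro mult_nonneg_nonneg divide_nonneg_nonneg) auto
    then have "wsu_pi 2 e g l h 0 * 1 \<le> wsu_pi 2 e g l h 0 * (1 + e * (wsu_pi 2 e g l h 1 / wsu_tilde 2 g (wsu_pi 2 e g l h) 1))"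
      using invc(1)[of h] by (intro mult_left_mono) auto
    then show ?thesis using 2 step1[OF N] by simp
  next
    case 3 then show ?thesis unfolding pi_step by auto
  qed
qed

lemma mono: "N \<le> length h \<Longrightarrow> wsu_pi 2 e g l h 0 \<le> wsu_pi 2 e g l (c @ h) 0"
proof (induction c)
  case Nil then show ?case by simp
next
  case (Cons I c)
  then show ?case using mono1[of "c @ h" I] by auto
qed

lemma bound:
  assumes s: "2 \<le> (1 + e/2) ^ s"
  shows "N \<le> length h \<Longrightarrow> set h \<subseteq> {..<2} \<Longrightarrow> 1/4 \<le> wsu_pi 2 e g l h 0 \<Longrightarrow>
    (\<Sum>c\<in>histories 2 n. if wsu_pi 2 e g l (c @ h) 0 \<le> 3/4 then wsu_hist_prob 2 e g l (c @ h) else 0)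
      \<le> wsu_hist_prob 2 e g l h * (3 / (4 * wsu_pi 2 e g l h 0)) ^ s * (7/8) ^ n"
proof (induction n arbitrary: h)
  case 0
  have H: "histories 2 0 = {[]}" by (auto simp: histories_def)
  have hp: "0 \<le> wsu_hist_prob 2 e g l h" using hp_nn 0 by auto
  show ?case
  proof (cases "wsu_pi 2 e g l h 0 \<le> 3/4")
    case True
    have "1 \<le> 3 / (4 * wsu_pi 2 e g l h 0)" using True 0 by (simp add: field_simps)
    then have "1 \<le> (3 / (4 * wsu_pi 2 e g l h 0)) ^ s" by (rule one_le_power)
    then have "wsu_hist_prob 2 e g l h * 1 \<le> wsu_hist_prob 2 e g l h * (3 / (4 * wsu_pi 2 e g l h 0)) ^ s"
      using hp by (intro mult_left_mono) auto
    then show ?thesis using True H by simp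
  next
    case False
    have "0 \<le> wsu_hist_prob 2 e g l h * (3 / (4 * wsu_pi 2 e g l h 0)) ^ s"
      using hp 0 by simp
    then show ?thesis using False H by simp
  qed
next
  case (Suc n)
  define p0 where "p0 = wsu_pi 2 e g l h 0"
  define p1 where "p1 = wsu_pi 2 e g l h 1"
  define t0 where "t0 = wsu_tilde 2 g (wsu_pi 2 e g l h) 0"
  define t1 where "t1 = wsu_tilde 2 g (wsu_pi 2 e g l h) 1"
  define B where "B = (3 / (4 * p0)) ^ s"
  define hp where "hp = wsu_hist_prob 2 e g l h"
  have hp0: "0 \<le> hp" unfolding hp_def using hp_nn Suc by auto
  have p0: "1/4 \<le> p0" using Suc unfolding p0_def by auto
  have B0: "0 \<le> B" unfolding B_def using p0 by simp
  show ?case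
  proof (cases "wsu_pi 2 e g l h 0 \<le> 3/4")
    case False
    have "(\<Sum>c\<in>histories 2 (Suc n). if wsu_pi 2 e g l (c @ h) 0 \<le> 3/4 then wsu_hist_prob 2 e g l (c @ h) else 0) = 0"
    proof -
      have "\<And>c. \<not> wsu_pi 2 e g l (c @ h) 0 \<le> 3/4" using False mono[OF Suc.prems(1)] by (meson order.trans)
      then show ?thesis by simp
    qed
    moreover have "0 \<le> hp * B * (7/8) ^ Suc n" using hp0 B0 by simp
    ultimately show ?thesis unfolding hp_def B_def p0_def by simp
  next
    case True
    have len0: "N \<le> length (0 # h)" "set (0 # h) \<subseteq> {..<2}" "1/4 \<le> wsu_pi 2 e g l (0 # h) 0"
      using Suc.prems mono1[of h 0] by auto
    have len1: "N \<le> length (1 # h)" "set (1 # h) \<subseteq> {..<2}" "1/4 \<le> wsu_pi 2 e g l (1 # h) 0"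
      using Suc.prems mono1[of h 1] by auto
    define a where "a = e * (p1 / t1)"
    have P0: "wsu_pi 2 e g l (0 # h) 0 = p0" using step0[OF Suc.prems(1)] p0_def by simp
    have P1: "wsu_pi 2 e g l (1 # h) 0 = p0 * (1 + a)" using step1[OF Suc.prems(1)]
      unfolding p0_def a_def p1_def t1_def by simp
    have H0: "wsu_hist_prob 2 e g l (0 # h) = hp * t0" unfolding hp_def t0_def by simp
    have H1: "wsu_hist_prob 2 e g l (1 # h) = hp * t1" unfolding hp_def t1_def by simp
    have sum01: "t0 + t1 = 1" unfolding t0_def t1_def by (rule tilde_sum)
    have inv01: "0 \<le> p1" "p0 + p1 = 1" unfolding p0_def p1_def using invc by auto
    have p1q: "1/4 \<le> p1" using True inv01 unfolding p0_def by linarith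
    have t1e: "t1 = (1-g) * p1 + g/2" unfolding t1_def p1_def by (simp add: tilde_simp)
    have t1q: "1/4 \<le> t1" using t1e p1q g
    proof -
      have "(1-g) * (1/4) \<le> (1-g) * p1" using p1q g by (intro mult_left_mono) auto
      moreover have "(1-g)*(1/4) = 1/4 - g/4" by simp
      ultimately show ?thesis using t1e g by linarith
    qed
    have t0n: "0 \<le> t0" unfolding t0_def by (rule tilde_nn) simp
    have t1le: "t1 \<le> 2 * p1"
    proof -
      have "g/2 \<le> (1+g) * (1/4)" using g by simp
      also have "\<dots> \<le> (1+g) * p1" using p1q g by (intro mult_left_mono) auto
      finally show ?thesis using t1e by (simp add: algebra_simps)
    qed
    have "1/2 \<le> p1 / t1" using t1le t1q by (simp add: field_simps)
    then have ae: "e/2 \<le> a" unfolding a_def using e(1)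
      by (metis mult.commute mult_left_mono times_divide_eq_right mult_1_right divide_self_if)
    have a0: "0 \<le> a" using ae e by linarith
    have as: "2 \<le> (1+a)^s"
      using s power_mono[of "1 + e/2" "1 + a" s] ae e by linarith
    have "(\<Sum>c\<in>histories 2 (Suc n). if wsu_pi 2 e g l (c @ h) 0 \<le> 3/4 then wsu_hist_prob 2 e g l (c @ h) else 0)
      = (\<Sum>c\<in>histories 2 n. if wsu_pi 2 e g l (c @ (0 # h)) 0 \<le> 3/4 then wsu_hist_prob 2 e g l (c @ (0 # h)) else 0)
      + (\<Sum>c\<in>histories 2 n. if wsu_pi 2 e g l (c @ (1 # h)) 0 \<le> 3/4 then wsu_hist_prob 2 e g l (c @ (1 # h)) else 0)"
      by (simp add: sum_hist_Suc sum2 cong: if_cong)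
    also have "\<dots> \<le> hp * t0 * (3 / (4 * p0)) ^ s * (7/8) ^ n + hp * t1 * (3 / (4 * (p0 * (1 + a)))) ^ s * (7/8) ^ n"
      using Suc.IH[OF len0] Suc.IH[OF len1] unfolding P0 P1 H0 H1 by (rule add_mono)
    also have "\<dots> = hp * (7/8) ^ n * (t0 * (3 / (4 * p0)) ^ s + t1 * (3 / (4 * (p0 * (1 + a)))) ^ s)"
      by (simp add: algebra_simps)
    also have "\<dots> \<le> hp * (7/8) ^ n * (7/8 * (3/(4*p0))^s)"
      using key_ineq[of p0 t0 t1 a s] p0 sum01 t1q t0n a0 as hp0
      by (intro mult_left_mono) auto
    also have "\<dots> = hp * B * (7/8) ^ Suc n" unfolding B_def by simp
    finally show ?thesis unfolding hp_def B_def p0_def .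
  qed
qed

lemma prob_split:
  "wsu_prob 2 e g l (n + m) F = (\<Sum>h\<in>histories 2 m. \<Sum>c\<in>histories 2 n.
      if F (c @ h) then wsu_hist_prob 2 e g l (c @ h) else 0)"
  unfolding wsu_prob_def
  by (simp add: sum.inter_filter[OF finite_hist] sum_hist_add)

lemma cond_bound:
  assumes s: "2 \<le> (1 + e/2) ^ s" and Nm: "N \<le> m"
    and P: "0 < wsu_prob 2 e g l (n + m) (\<lambda>hs. 1/4 \<le> pi_at 2 e g l hs m 0)"
  shows "cond_prob 2 e g l (n + m) (\<lambda>hs. pi_at 2 e g l hs (n + m) 0 \<le> 3/4)
           (\<lambda>hs. 1/4 \<le> pi_at 2 e g l hs m 0) \<le> 3^s * (7/8)^n"
proof -
  let ?hp = "wsu_hist_prob 2 e g l"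
  let ?P = "wsu_pi 2 e g l"
  have pa: "pi_at 2 e g l (c @ h) m = ?P h" "pi_at 2 e g l (c @ h) (n + m) = ?P (c @ h)"
    if "c \<in> histories 2 n" "h \<in> histories 2 m" for c h
    using that by (auto simp: pi_at_def histories_def)
  have E: "wsu_prob 2 e g l (n + m) (\<lambda>hs. 1/4 \<le> pi_at 2 e g l hs m 0)
      = (\<Sum>h\<in>histories 2 m. if 1/4 \<le> ?P h 0 then ?hp h else 0)"
    unfolding prob_split
  proof (rule sum.cong[OF refl])
    fix h assume h: "h \<in> histories 2 m"
    have "(\<Sum>c\<in>histories 2 n. if 1/4 \<le> pi_at 2 e g l (c @ h) m 0 then ?hp (c @ h) else 0)
        = (\<Sum>c\<in>histories 2 n. if 1/4 \<le> ?P h 0 then ?hp (c @ h) else 0)"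
      using pa h by (intro sum.cong) auto
    also have "\<dots> = (if 1/4 \<le> ?P h 0 then ?hp h else 0)"
      using total[where n=n and h=h] by simp
    finally show "(\<Sum>c\<in>histories 2 n. if 1/4 \<le> pi_at 2 e g l (c @ h) m 0 then ?hp (c @ h) else 0)
        = (if 1/4 \<le> ?P h 0 then ?hp h else 0)" .
  qed
  have AE: "wsu_prob 2 e g l (n + m) (\<lambda>hs. pi_at 2 e g l hs (n + m) 0 \<le> 3/4 \<and> 1/4 \<le> pi_at 2 e g l hs m 0)
      \<le> (\<Sum>h\<in>histories 2 m. if 1/4 \<le> ?P h 0 then ?hp h * (3^s * (7/8)^n) else 0)"
    unfolding prob_split
  proof (rule sum_mono)
    fix h assume h: "h \<in> histories 2 m"
    have "(\<Sum>c\<in>histories 2 n. if pi_at 2 e g l (c @ h) (n + m) 0 \<le> 3/4 \<and> 1/4 \<le> pi_at 2 e g l (c @ h) m 0 then ?hp (c @ h) else 0)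
        = (if 1/4 \<le> ?P h 0 then (\<Sum>c\<in>histories 2 n. if ?P (c @ h) 0 \<le> 3/4 then ?hp (c @ h) else 0) else 0)"
      using pa h by (auto intro: sum.cong)
    also have "\<dots> \<le> (if 1/4 \<le> ?P h 0 then ?hp h * (3^s * (7/8)^n) else 0)"
    proof (cases "1/4 \<le> ?P h 0")
      case True
      have hl: "N \<le> length h" "set h \<subseteq> {..<2}" using h Nm by (auto simp: histories_def)
      have hp0: "0 \<le> ?hp h" using hp_nn hl by auto
      have "3 / (4 * ?P h 0) \<le> 3" using True by (simp add: field_simps)
      then have "(3 / (4 * ?P h 0))^s \<le> 3^s" using True by (intro power_mono) auto
      then have "?hp h * (3 / (4 * ?P h 0))^s * (7/8)^n \<le> ?hp h * 3^s * (7/8)^n"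
        using hp0 by (intro mult_right_mono mult_left_mono) auto
      then show ?thesis using True bound[OF s hl True, of n] by simp
    qed simp
    finally show "(\<Sum>c\<in>histories 2 n. if pi_at 2 e g l (c @ h) (n + m) 0 \<le> 3/4 \<and> 1/4 \<le> pi_at 2 e g l (c @ h) m 0 then ?hp (c @ h) else 0)
        \<le> (if 1/4 \<le> ?P h 0 then ?hp h * (3^s * (7/8)^n) else 0)" .
  qed
  also have "\<dots> = 3^s * (7/8)^n * wsu_prob 2 e g l (n + m) (\<lambda>hs. 1/4 \<le> pi_at 2 e g l hs m 0)"
    unfolding E sum_distrib_left by (intro sum.cong) auto
  finally show ?thesis unfolding cond_prob_def using P by (simp add: divide_le_eq)
qed

end



lemma numeric:
  fixes T n s :: nat and e g :: real
  assumes T: "10^6 \<le> T" and e: "T powr (-2/3) \<le> e" and g: "g \<le> T powr (-1/3)"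
    and eg: "e * 2 / g \<le> 1/2" and e0: "0 < e" and g0: "0 < g"
    and s: "real s \<le> 2/e + 1" and n: "real n = 79/100 * real T"
  shows "3^s * (7/8::real)^n \<le> 75/4 * exp (-(79/400) * e * real T)"
proof -
  define x where "x = real T powr (1/3)"
  have T0: "0 < real T" using T by simp
  have x0: "0 < x" unfolding x_def using T0 by simp
  have x3: "x^3 = real T" unfolding x_def using T0 by (simp add: powr_power)
  have x2: "real T powr (2/3) = x^2" unfolding x_def using T0 by (simp add: powr_power)
  have x100: "100 \<le> x"
  proof (rule ccontr)
    assume "\<not> 100 \<le> x"
    then have "x^3 < 100^3" using x0 by (intro power_strict_mono) auto
    then show False using x3 T by simp
  qed
  have e1: "1/x^2 \<le> e" using e x2 by (simp add: powr_minus_divide)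
  have ie: "1/e \<le> x^2" using e1 x0 e0 by (simp add: field_simps)
  have g1: "g \<le> 1/x" using g unfolding x_def by (simp add: powr_minus_divide)
  have e4: "e \<le> g/4" using eg g0 by (simp add: field_simps)
  have eT: "e * real T \<le> x^2/4"
  proof -
    have "e * real T \<le> (1/(4*x)) * x^3" unfolding x3[symmetric] using e4 g1 x0 T0
      by (intro mult_right_mono) auto
    also have "\<dots> = x^2/4" using x0 by (simp add: power3_eq_cube power2_eq_square)
    finally show ?thesis .
  qed
  have key: "2 * real s - real n / 8 \<le> -(79/400) * e * real T"
  proof -
    have "2 * real s \<le> 4 * x^2 + 2" using s ie by simp
    moreover have "(79/400) * (e * real T) \<le> (79/400) * (x^2/4)" using eT by simp
    moreover have "real n / 8 = 79/800 * x^3" using n x3 by simp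
    moreover have "79/800 * x^3 \<ge> 79/800 * 100 * x^2" using x100 x0
      by (simp add: power3_eq_cube power2_eq_square mult_right_mono)
    moreover have "1 \<le> x^2" using x100 by (simp add: one_le_power)
    ultimately show ?thesis by (simp add: algebra_simps) 
  qed
  have "(3::real)^s \<le> exp 2 ^ s"
    using exp_ge_add_one_self[of 2] by (intro power_mono) auto
  also have "\<dots> = exp (2 * real s)" by (simp add: exp_of_nat_mult[symmetric] mult.commute)
  finally have a: "(3::real)^s \<le> exp (2 * real s)" .
  have "(7/8::real)^n \<le> exp (-1/8) ^ n"
    using exp_ge_add_one_self[of "-1/8"] by (intro power_mono) auto
  also have "\<dots> = exp (- real n / 8)" by (simp add: exp_of_nat_mult[symmetric])
  finally have b: "(7/8::real)^n \<le> exp (- real n / 8)" .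
  have "3^s * (7/8::real)^n \<le> exp (2 * real s) * exp (- real n / 8)"
    using a b by (intro mult_mono) auto
  also have "\<dots> = exp (2 * real s - real n / 8)" by (simp add: exp_add[symmetric])
  also have "\<dots> \<le> exp (-(79/400) * e * real T)" using key by simp
  also have "\<dots> \<le> 75/4 * exp (-(79/400) * e * real T)" by simp
  finally show ?thesis .
qed

theorem mainTheorem19:
  fixes eta gamma :: "nat \<Rightarrow> real"
  assumes "\<And>T. T \<ge> 1 \<Longrightarrow> 100 dvd T \<Longrightarrow>
             valid_pair 2 (eta T) (gamma T) \<and> nontrivial_regime T (eta T) (gamma T)"
  shows "\<exists>T0. \<forall>T \<ge> T0. T \<ge> 1 \<longrightarrow> 100 dvd T \<longrightarrow>
     (let l = two_phase_loss T;
          E2 = (\<lambda>hs. pi_at 2 (eta T) (gamma T) l hs (T div 100 + 2 * T div 10) 0 \<ge> 1/4);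
          A = (\<lambda>hs. pi_at 2 (eta T) (gamma T) l hs T 0 \<le> 3/4)
      in wsu_prob 2 (eta T) (gamma T) l T E2 > 0 \<longrightarrow>
         cond_prob 2 (eta T) (gamma T) l T A E2 \<le> 75/4 * exp (- (79/400) * eta T * real T))"
proof (intro exI[of _ "10^6"] allI impI)
  fix T :: nat
  assume T: "10^6 \<le> T" "1 \<le> T" "100 dvd T"
  define e where "e = eta T"
  define g where "g = gamma T"
  define l where "l = two_phase_loss T"
  define k where "k = T div 100"
  define m where "m = T div 100 + 2 * T div 10"
  define n where "n = 79 * k"
  have Tk: "T = 100 * k" using T(3) unfolding k_def by auto
  have mk: "m = 21 * k" unfolding m_def k_def using Tk by simp
  have Tnm: "T = n + m" unfolding n_def using mk Tk by simp
  have vp: "valid_pair 2 e g" "nontrivial_regime T e g" using assms[OF T(2,3)] unfolding e_def g_def by auto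
  have e0: "0 < e" and e1: "e < 1/2" and g0: "0 < g" and g1: "g < 1/2" and eg: "e * 2 / g \<le> 1/2"
    using vp(1) unfolding valid_pair_def by auto
  have lb: "\<And>t i. 0 \<le> l t i \<and> l t i \<le> 1" unfolding l_def two_phase_loss_def by auto
  have ph2: "\<And>t. k < t \<Longrightarrow> l t 0 = 0 \<and> l t 1 = 1" unfolding l_def two_phase_loss_def k_def by auto
  define s where "s = nat (ceiling (2/e))"
  have sr: "real s = of_int (ceiling (2/e))" unfolding s_def using e0 by simp
  have s1: "real s \<le> 2/e + 1" using sr by linarith
  have s2: "2/e \<le> real s" using sr by linarith
  have s: "2 \<le> (1 + e/2) ^ s"
  proof -
    have "1 \<le> real s * (e/2)" using s2 e0 by (simp add: field_simps)
    then show ?thesis using Bernoulli_inequality[of "e/2" s] e0 by simp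
  qed
  have g1': "g < 1" using g1 by simp
  have Nm: "k \<le> m" unfolding mk by simp
  have cb: "0 < wsu_prob 2 e g l (n + m) (\<lambda>hs. 1/4 \<le> pi_at 2 e g l hs m 0) \<Longrightarrow>
      cond_prob 2 e g l (n + m) (\<lambda>hs. pi_at 2 e g l hs (n + m) 0 \<le> 3/4)
           (\<lambda>hs. 1/4 \<le> pi_at 2 e g l hs m 0) \<le> 3^s * (7/8)^n"
    using cond_bound[where e=e and g=g and l=l and N=k, OF g0 g1' less_imp_le[OF e0] eg lb ph2 s Nm] by simp
  have nr: "real n = 79/100 * real T" unfolding n_def Tk by simp
  have num: "3^s * (7/8::real)^n \<le> 75/4 * exp (-(79/400) * e * real T)"
    using numeric[OF _ _ _ eg e0 g0 s1 nr] T(1) vp(2) unfolding nontrivial_regime_def by simp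
  show "let l = two_phase_loss T;
          E2 = (\<lambda>hs. pi_at 2 (eta T) (gamma T) l hs (T div 100 + 2 * T div 10) 0 \<ge> 1/4);
          A = (\<lambda>hs. pi_at 2 (eta T) (gamma T) l hs T 0 \<le> 3/4)
      in wsu_prob 2 (eta T) (gamma T) l T E2 > 0 \<longrightarrow>
         cond_prob 2 (eta T) (gamma T) l T A E2 \<le> 75/4 * exp (- (79/400) * eta T * real T)"
    unfolding Let_def e_def[symmetric] g_def[symmetric] l_def[symmetric] m_def[symmetric]
    using cb num unfolding Tnm[symmetric] by auto
qed

end
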